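(* Let $u\le v$ in $S_n$, let $I$ be an order ideal in $[u,v]$, and let $x\in I$ have a strong hypercube cluster $\theta_x:\mathcal{A}_x\to[u,v]$ relative to $I$. Let $\mathcal{I}\subset\mathcal{A}_x$ be any order ideal (with respect to inclusion). Then for any injection $\phi:\mathcal{I}\hookrightarrow[u,v]$ satisfying $\phi(\varnothing)=x$, $\phi(\{y\})=y$ for every singleton $\{y\}\in\mathcal{I}$, and $\phi(Y_1)\to\phi(Y_2)$ in $\Gamma(u,v)$ whenever $Y_1,Y_2\in\mathcal{I}$ with $Y_1\to Y_2$, the map $\phi$ equals the restriction of $\theta_x$ to $\mathcal{I}$.
   Context: $S_n$ is the symmetric group with length $\ell$ (with respect to simple reflections $s_i=(i\ i{+}1)$), $T$ its set of transpositions. The Bruhat graph $\Gamma$ has vertex set $S_n$ and an edge $w\to tw$ whenever $t\in T$, $\ell(w)<\ell(tw)$; Bruhat order $\le$ is reachability in $\Gamma$; $\Gamma(u,v)$ is the induced subgraph on the interval $[u,v]$. An order ideal of $[u,v]$ is a downward closed subset. For an order ideal $I\subset[u,v]$ and $x\in I$ let $\mathcal{Y}_x=\{y\in[u,v]\setminus I: x\to y \text{ in }\Gamma\}$ and $\mathcal{A}_x$ the set of subsets of $\mathcal{Y}_x$ that are antichains in Bruhat order, ordered by inclusion and viewed as a directed graph with $Y_1\to Y_2$ iff $Y_1\subset Y_2$ and $|Y_2\setminus Y_1|=1$. A strong hypercube cluster at $x$ relative to $I$ is a map $\theta_x:\mathcal{A}_x\to[u,v]$ such that: (HC1) $\theta_x(\varnothing)=x$;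 (HC2) $\theta_x(\{y\})=y$ for $y\in\mathcal{Y}_x$; (HC3) if $Y_1\to Y_2$ then $\theta_x(Y_1)\to\theta_x(Y_2)$ is an edge of $\Gamma$; (HC4) if $Y,Y'\in\mathcal{A}_x$ with $|Y|=|Y'|=|Y\cap Y'|+1$ and there is $w$ such that $\theta_x(Y\cap Y')\to\theta_x(Y)\to w$ and $\theta_x(Y\cap Y')\to\theta_x(Y')\to w$ form a diamond (four distinct vertices with these edges) in $\Gamma(u,v)$, then $Y\cup Y'$ is an antichain and $\theta_x(Y\cup Y')=w$. *)

theory Defs
  imports "HOL-Combinatorics.Combinatorics"
begin

type_synonym perm = "nat \<Rightarrow> nat"

definition Sn :: "nat \<Rightarrow> perm set" where
  "Sn n = {w. w permutes {..<n}}"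

text \<open>Coxeter length w.r.t. simple reflections = number of inversions.\<close>
definition len :: "nat \<Rightarrow> perm \<Rightarrow> nat" where
  "len n w = card {(i, j). i < j \<and> j < n \<and> w j < w i}"

definition transpositions :: "nat \<Rightarrow> perm set" where
  "transpositions n = {transpose i j | i j. i < n \<and> j < n \<and> i \<noteq> j}"

definition bruhat_edge :: "nat \<Rightarrow> perm \<Rightarrow> perm \<Rightarrow> bool" where
  "bruhat_edge n w w' \<longleftrightarrow> w \<in> Sn n \<and> (\<exists>t \<in> transpositions n. w' = t \<circ> w) \<and> len n w < len n w'"

definition bruhat_le :: "nat \<Rightarrow> perm \<Rightarrow> perm \<Rightarrow> bool" where
  "bruhat_le n u v \<longleftrightarrow> u \<in> Sn n \<and> (bruhat_edge n)\<^sup>*\<^sup>* u v"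

definition bruhat_interval :: "nat \<Rightarrow> perm \<Rightarrow> perm \<Rightarrow> perm set" where
  "bruhat_interval n u v = {w. bruhat_le n u w \<and> bruhat_le n w v}"

definition is_order_ideal :: "nat \<Rightarrow> perm \<Rightarrow> perm \<Rightarrow> perm set \<Rightarrow> bool" where
  "is_order_ideal n u v I \<longleftrightarrow> I \<subseteq> bruhat_interval n u v \<and>
     (\<forall>a \<in> I. \<forall>b \<in> bruhat_interval n u v. bruhat_le n b a \<longrightarrow> b \<in> I)"

definition bruhat_antichain :: "nat \<Rightarrow> perm set \<Rightarrow> bool" where
  "bruhat_antichain n Y \<longleftrightarrow> (\<forall>a \<in> Y. \<forall>b \<in> Y. bruhat_le n a b \<longrightarrow> a = b)"

definition Ycal :: "nat \<Rightarrow> perm \<Rightarrow> perm \<Rightarrow> perm set \<Rightarrow> perm \<Rightarrow> perm set" where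
  "Ycal n u v I x = {y \<in> bruhat_interval n u v - I. bruhat_edge n x y}"

definition Acal :: "nat \<Rightarrow> perm \<Rightarrow> perm \<Rightarrow> perm set \<Rightarrow> perm \<Rightarrow> perm set set" where
  "Acal n u v I x = {Y. Y \<subseteq> Ycal n u v I x \<and> bruhat_antichain n Y}"

definition cover_edge :: "'a set \<Rightarrow> 'a set \<Rightarrow> bool" where
  "cover_edge Y1 Y2 \<longleftrightarrow> Y1 \<subseteq> Y2 \<and> card (Y2 - Y1) = 1"

definition strong_hypercube_cluster ::
  "nat \<Rightarrow> perm \<Rightarrow> perm \<Rightarrow> perm set \<Rightarrow> perm \<Rightarrow> (perm set \<Rightarrow> perm) \<Rightarrow> bool" where
  "strong_hypercube_cluster n u v I x \<theta> \<longleftrightarrow>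
     (\<forall>Y \<in> Acal n u v I x. \<theta> Y \<in> bruhat_interval n u v) \<and>
     \<theta> {} = x \<and>
     (\<forall>y \<in> Ycal n u v I x. \<theta> {y} = y) \<and>
     (\<forall>Y1 \<in> Acal n u v I x. \<forall>Y2 \<in> Acal n u v I x.
        cover_edge Y1 Y2 \<longrightarrow> bruhat_edge n (\<theta> Y1) (\<theta> Y2)) \<and>
     (\<forall>Y \<in> Acal n u v I x. \<forall>Y' \<in> Acal n u v I x. \<forall>w \<in> bruhat_interval n u v.
        card Y = card (Y \<inter> Y') + 1 \<and> card Y' = card (Y \<inter> Y') + 1 \<and>
        distinct [\<theta> (Y \<inter> Y'), \<theta> Y, \<theta> Y', w] \<and>
        bruhat_edge n (\<theta> (Y \<inter> Y')) (\<theta> Y) \<and> bruhat_edge n (\<theta> Y) w \<and>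
        bruhat_edge n (\<theta> (Y \<inter> Y')) (\<theta> Y') \<and> bruhat_edge n (\<theta> Y') w
        \<longrightarrow> bruhat_antichain n (Y \<union> Y') \<and> \<theta> (Y \<union> Y') = w)"

end

theory Submission
  imports Defs
begin

lemma edge_target_Sn:
  assumes "bruhat_edge n w w'" shows "w' \<in> Sn n"
proof -
  from assms obtain t where w: "w \<in> Sn n" and t: "t \<in> transpositions n" and e: "w' = t \<circ> w"
    unfolding bruhat_edge_def by blast
  from t obtain i j where "t = transpose i j" "i < n" "j < n"
    unfolding transpositions_def by blast
  then have "t permutes {..<n}" by (simp add: permutes_swap_id)
  with w e show ?thesis unfolding Sn_def by (simp add: permutes_compose)
qed

lemma finite_Ycal: "finite (Ycal n u v I x)"
proof (rule finite_subset)
  show "Ycal n u v I x \<subseteq> Sn n"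
    unfolding Ycal_def using edge_target_Sn by blast
  show "finite (Sn n)" unfolding Sn_def by (rule finite_permutations) simp
qed

theorem lemma3p5:
  fixes n :: nat and u v x :: perm and I :: "perm set"
    and \<theta> :: "perm set \<Rightarrow> perm" and \<II> :: "perm set set" and \<phi> :: "perm set \<Rightarrow> perm"
  assumes "bruhat_le n u v"
    and "is_order_ideal n u v I"
    and "x \<in> I"
    and "strong_hypercube_cluster n u v I x \<theta>"
    and "\<II> \<subseteq> Acal n u v I x"
    and "\<forall>Y \<in> \<II>. \<forall>Z. Z \<subseteq> Y \<longrightarrow> Z \<in> \<II>"
    and "inj_on \<phi> \<II>"
    and "\<phi> ` \<II> \<subseteq> bruhat_interval n u v"
    and "\<phi> {} = x"
    and "\<forall>y. {y} \<in> \<II> \<longrightarrow> \<phi> {y} = y"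
    and "\<forall>Y1 \<in> \<II>. \<forall>Y2 \<in> \<II>. cover_edge Y1 Y2 \<longrightarrow> bruhat_edge n (\<phi> Y1) (\<phi> Y2)"
  shows "\<forall>Y \<in> \<II>. \<phi> Y = \<theta> Y"
proof -
  note H = assms(4)[unfolded strong_hypercube_cluster_def]
  have fin: "finite Y" if "Y \<in> \<II>" for Y
  proof -
    have "Y \<subseteq> Ycal n u v I x" using that assms(5) unfolding Acal_def by blast
    then show ?thesis using finite_Ycal by (rule finite_subset)
  qed
  have main: "\<And>Y. card Y = k \<Longrightarrow> Y \<in> \<II> \<Longrightarrow> \<phi> Y = \<theta> Y" for k
  proof (induction k rule: less_induct)
    case (less k Y)
    have fY: "finite Y" using fin less(3) .
    have "Y = {} \<or> (\<exists>y. Y = {y}) \<or> (\<exists>a b. a \<in> Y \<and> b \<in> Y \<and> a \<noteq> b)" by blast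
    then consider "Y = {}" | y where "Y = {y}" | a b where "a \<in> Y" "b \<in> Y" "a \<noteq> b"
      by blast
    then show ?case
    proof cases
      case 1 then show ?thesis using assms(9) H by simp
    next
      case 2
      then have "y \<in> Ycal n u v I x" using less(3) assms(5) unfolding Acal_def by blast
      then show ?thesis using 2 assms(10) less(3) H by simp
    next
      case 3
      define Y1 where "Y1 = Y - {a}"
      define Y2 where "Y2 = Y - {b}"
      define Y0 where "Y0 = Y - {a,b}"
      have Y0: "Y1 \<inter> Y2 = Y0" unfolding Y0_def Y1_def Y2_def by blast
      have U: "Y1 \<union> Y2 = Y" unfolding Y1_def Y2_def using 3 by blast
      have inI: "Y0 \<in> \<II>" "Y1 \<in> \<II>" "Y2 \<in> \<II>"
        using assms(6) less(3) unfolding Y0_def Y1_def Y2_def by blast+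
      have cY1: "card Y1 = k - 1" using 3 fY less(2) unfolding Y1_def by simp
      have cY2: "card Y2 = k - 1" using 3 fY less(2) unfolding Y2_def by simp
      have cY0: "card Y0 = k - 2" using 3 fY less(2) unfolding Y0_def
        by (simp add: card_Diff_subset)
      have k2: "k \<ge> 2" using 3 fY less(2)
        by (metis card_2_iff card_mono empty_subsetI insert_subset)
      have IH: "\<phi> Z = \<theta> Z" if "Z \<in> {Y0, Y1, Y2}" for Z
      proof -
        have "card Z < k" "Z \<in> \<II>" using that inI cY0 cY1 cY2 k2 by auto
        then show ?thesis using less(1) by blast
      qed
      have "Y1 - Y0 = {b}" "Y2 - Y0 = {a}" "Y - Y1 = {a}" "Y - Y2 = {b}"
        using 3 unfolding Y0_def Y1_def Y2_def by blast+
      moreover have "Y0 \<subseteq> Y1" "Y0 \<subseteq> Y2" "Y1 \<subseteq> Y" "Y2 \<subseteq> Y"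
        unfolding Y0_def Y1_def Y2_def by blast+
      ultimately have cov: "cover_edge Y0 Y1" "cover_edge Y0 Y2" "cover_edge Y1 Y" "cover_edge Y2 Y"
        unfolding cover_edge_def by simp_all
      have neq: "Y0 \<noteq> Y1" "Y0 \<noteq> Y2" "Y0 \<noteq> Y" "Y1 \<noteq> Y2" "Y1 \<noteq> Y" "Y2 \<noteq> Y"
        using 3 unfolding Y0_def Y1_def Y2_def by blast+
      have dist: "distinct [\<phi> Y0, \<phi> Y1, \<phi> Y2, \<phi> Y]"
        using neq inI less(3) assms(7) unfolding inj_on_def by auto
      have edges: "bruhat_edge n (\<phi> Y0) (\<phi> Y1)" "bruhat_edge n (\<phi> Y0) (\<phi> Y2)"
        "bruhat_edge n (\<phi> Y1) (\<phi> Y)" "bruhat_edge n (\<phi> Y2) (\<phi> Y)"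
        using cov inI less(3) assms(11) by blast+
      have A: "Y1 \<in> Acal n u v I x" "Y2 \<in> Acal n u v I x"
        using inI assms(5) by blast+
      have w: "\<phi> Y \<in> bruhat_interval n u v" using assms(8) less(3) by blast
      have "card Y1 = card (Y1 \<inter> Y2) + 1" "card Y2 = card (Y1 \<inter> Y2) + 1"
        using cY0 cY1 cY2 k2 Y0 by simp_all
      moreover have "\<phi> Y0 = \<theta> Y0" "\<phi> Y1 = \<theta> Y1" "\<phi> Y2 = \<theta> Y2" using IH by auto
      ultimately have c: "card Y1 = card (Y1 \<inter> Y2) + 1 \<and> card Y2 = card (Y1 \<inter> Y2) + 1 \<and>
        distinct [\<theta> (Y1 \<inter> Y2), \<theta> Y1, \<theta> Y2, \<phi> Y] \<and>
        bruhat_edge n (\<theta> (Y1 \<inter> Y2)) (\<theta> Y1) \<and> bruhat_edge n (\<theta> Y1) (\<phi> Y) \<and>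
        bruhat_edge n (\<theta> (Y1 \<inter> Y2)) (\<theta> Y2) \<and> bruhat_edge n (\<theta> Y2) (\<phi> Y)"
        using dist edges Y0 by simp
      have HC4: "\<forall>Y \<in> Acal n u v I x. \<forall>Y' \<in> Acal n u v I x. \<forall>w \<in> bruhat_interval n u v.
        card Y = card (Y \<inter> Y') + 1 \<and> card Y' = card (Y \<inter> Y') + 1 \<and>
        distinct [\<theta> (Y \<inter> Y'), \<theta> Y, \<theta> Y', w] \<and>
        bruhat_edge n (\<theta> (Y \<inter> Y')) (\<theta> Y) \<and> bruhat_edge n (\<theta> Y) w \<and>
        bruhat_edge n (\<theta> (Y \<inter> Y')) (\<theta> Y') \<and> bruhat_edge n (\<theta> Y') w
        \<longrightarrow> bruhat_antichain n (Y \<union> Y') \<and> \<theta> (Y \<union> Y') = w"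
        using H by blast
      have "\<theta> (Y1 \<union> Y2) = \<phi> Y"
        using HC4[rule_format, OF A(1) A(2) w c] by simp
      then show ?thesis using U by simp
    qed
  qed
  show ?thesis using main by blast
qed

end
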